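(* Let $c>0$, $k>0$ and $v\in\mathbb{R}^d$. Let $\xi$ be a zero-mean random vector in $\mathbb{R}^d$ with density $p$ and variance $\sigma_\xi^2=\mathbb{E}\|\xi\|^2<\infty$, let $\zeta\sim\mathcal N(0,I)$ be independent of $\xi$, and let $g=\mathrm{clip}(v+\xi+k\zeta,c)$. Then $$\mathbb{E}_{\xi\sim p,\zeta}[\langle v,g\rangle]\ge\|v\|\min\left\{\|v\|,\frac34c\right\}\mathbb{P}\left(\|k\zeta\|<\frac c4\right)-O\!\left(\frac{\sigma_\xi^2}{k^2}\right),$$ where the implied constant in $O(\cdot)$ does not depend on $k$ or on the distribution of $\xi$.
   Context: For $g\in\mathbb{R}^d$ and $c>0$, $\mathrm{clip}(g,c)=g\cdot\min\left(1,\frac{c}{\|g\|}\right)$ (with $\mathrm{clip}(0,c)=0$). In the paper $v=\nabla f(x_t)$ is the true gradient and $\xi=\xi_t$ the gradient noise; Gaussian noise $k\zeta$ is added before clipping. *)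

theory Defs
  imports "HOL-Probability.Probability"
begin

definition clip :: "'a::real_normed_vector \<Rightarrow> real \<Rightarrow> 'a" where
  "clip g c = (if g = 0 then 0 else min 1 (c / norm g) *\<^sub>R g)"

definition std_gauss_density :: "'a::euclidean_space \<Rightarrow> real" where
  "std_gauss_density x = (2 * pi) powr (- real DIM('a) / 2) * exp (- (norm x)\<^sup>2 / 2)"

definition std_gauss :: "'a::euclidean_space measure" where
  "std_gauss = density lborel (\<lambda>x. ennreal (std_gauss_density x))"

definition zero_mean_finite_var_density :: "('a::euclidean_space \<Rightarrow> real) \<Rightarrow> bool" where
  "zero_mean_finite_var_density p \<longleftrightarrow>
     p \<in> borel_measurable borel \<and> (\<forall>x. 0 \<le> p x) \<and>
     (\<integral>\<^sup>+ x. ennreal (p x) \<partial>lborel) = 1 \<and>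
     integrable (density lborel (\<lambda>x. ennreal (p x))) (\<lambda>x. x) \<and>
     (\<integral> x. x \<partial>density lborel (\<lambda>x. ennreal (p x))) = 0 \<and>
     integrable (density lborel (\<lambda>x. ennreal (p x))) (\<lambda>x. (norm x)\<^sup>2)"

end

theory Submission
  imports Defs
begin


lemma clip_alt: "clip g c = min 1 (c / norm g) *\<^sub>R g"
  by (simp add: clip_def)

lemma clip_neg: "clip (- g) c = - clip g c"
  by (simp add: clip_def)

lemma norm_clip_le: assumes "c > 0" shows "norm (clip g c) \<le> c"
proof (cases "g = 0")
  case True then show ?thesis using assms by (simp add: clip_def)
next
  case False
  then have "norm g > 0" by simp
  have "norm (clip g c) = min 1 (c / norm g) * norm g"
    using assms False by (simp add: clip_def)
  also have "\<dots> = min (norm g) c" using \<open>norm g > 0\<close>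
    by (simp add: min_def field_simps)
  finally show ?thesis by simp
qed

lemma f_bound: assumes "c > 0" shows "\<bar>inner v (clip g c)\<bar> \<le> norm v * c"
proof -
  have "\<bar>inner v (clip g c)\<bar> \<le> norm v * norm (clip g c)" by (rule Cauchy_Schwarz_ineq2)
  also have "\<dots> \<le> norm v * c" by (rule mult_left_mono[OF norm_clip_le[OF assms] norm_ge_zero])
  finally show ?thesis .
qed

lemma clip_scale_norm: assumes "c > 0" shows "min 1 (c / norm g) * norm g = min (norm g) c"
proof (cases "g = 0")
  case True then show ?thesis using assms by simp
next
  case False then have "norm g > 0" by simp
  then show ?thesis by (simp add: min_def field_simps)
qed

lemma clip_monotone: assumes "c > 0"
  shows "inner (clip a c - clip b c) (a - b) \<ge> 0"
proof -
  define \<alpha> where "\<alpha> = min 1 (c / norm a)"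
  define \<beta> where "\<beta> = min 1 (c / norm b)"
  have a0: "\<alpha> \<ge> 0" "\<beta> \<ge> 0" using assms by (auto simp: \<alpha>_def \<beta>_def)
  have ea: "\<alpha> * norm a = min (norm a) c" using clip_scale_norm[OF assms] \<alpha>_def by simp
  have eb: "\<beta> * norm b = min (norm b) c" using clip_scale_norm[OF assms] \<beta>_def by simp
  have "inner (clip a c - clip b c) (a - b) = \<alpha> * (norm a)^2 + \<beta> * (norm b)^2 - (\<alpha> + \<beta>) * inner a b"
    by (simp add: clip_alt \<alpha>_def[symmetric] \<beta>_def[symmetric] inner_diff_left inner_diff_right
        power2_norm_eq_inner inner_commute algebra_simps)
  also have "\<dots> \<ge> \<alpha> * (norm a)^2 + \<beta> * (norm b)^2 - (\<alpha> + \<beta>) * (norm a * norm b)"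
  proof -
    have "inner a b \<le> norm a * norm b" by (rule norm_cauchy_schwarz)
    then show ?thesis using a0 by (simp add: mult_left_mono)
  qed
  moreover have "\<alpha> * (norm a)^2 + \<beta> * (norm b)^2 - (\<alpha> + \<beta>) * (norm a * norm b)
      = (\<alpha> * norm a - \<beta> * norm b) * (norm a - norm b)"
    by (simp add: algebra_simps power2_eq_square)
  moreover have "(\<alpha> * norm a - \<beta> * norm b) * (norm a - norm b) \<ge> 0"
    unfolding ea eb
    by (cases "norm a \<le> norm b") (auto simp: min_def intro: mult_nonneg_nonneg mult_nonpos_nonpos)
  ultimately show ?thesis by linarith
qed

lemma pair_nonneg: assumes "c > 0"
  shows "inner v (clip (v + w) c) + inner v (clip (v - w) c) \<ge> 0"
proof -
  have "clip (v - w) c = - clip (w - v) c" using clip_neg[of "w - v" c] by simp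
  then have "inner v (clip (v + w) c) + inner v (clip (v - w) c)
      = inner (clip (v + w) c - clip (w - v) c) ((v + w) - (w - v)) / 2"
    by (simp add: inner_diff_left inner_diff_right inner_add_right inner_commute algebra_simps)
  also have "\<dots> \<ge> 0" using clip_monotone[OF assms, of "v + w" "w - v"] by simp
  finally show ?thesis .
qed

lemma scalar_key:
  fixes c r q t X :: real
  assumes c: "c > 0" and X: "X > c" and r: "r \<ge> 3/4*c" and t: "t < c/4" "t \<ge> 0"
    and q: "\<bar>q\<bar> \<le> r * t" and X2: "X^2 * r^2 = (r^2 + q)^2 + (r^2 * t^2 - q^2)"
  shows "c / X * (r^2 + q) \<ge> 3/4*c*r + q"
proof -
  have rpos: "r > 0" using c r by linarith
  have qb: "q \<le> r * t" "-q \<le> r*t" using q by auto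
  have rt: "r * t \<le> r * (c/4)" using t rpos by (simp add: mult_left_mono)
  have "r*(c/4) = c*r/4" by simp
  note rt = rt[unfolded this]
  have A: "c*r/4 - q \<ge> 0" using qb rt by linarith
  have B: "c*r/4 + q \<ge> 0" using qb rt by linarith
  have P: "r^2 + q > 0"
  proof -
    have "r * t < r * r" using t r c rpos by (intro mult_strict_left_mono) auto
    then show ?thesis using qb by (simp add: power2_eq_square)
  qed
  show ?thesis
  proof (cases "3/4*c*r + q \<le> 0")
    case True
    have "c / X * (r^2 + q) > 0" using P c X by simp
    then show ?thesis using True by linarith
  next
    case False
    have X2c: "X^2 \<ge> c^2" using X c by (intro power_mono) auto
    have "r^2 * t^2 \<le> r^2 * (c/4)^2"
      using t rpos by (intro mult_left_mono power_mono) auto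
    then have rtq: "r^2 * t^2 - q^2 \<le> (c*r/4 - q) * (c*r/4 + q)"
      by (simp add: algebra_simps power2_eq_square)
    have "c^2 * (r^2 * t^2 - q^2) \<le> c^2 * ((c*r/4 - q) * (c*r/4 + q))"
      using rtq by (simp add: mult_left_mono)
    also have "\<dots> \<le> c^2 * ((c*r/4 - q) * (7*c*r/4 + q))"
      using A B c rpos by (intro mult_left_mono) (auto intro!: mult_left_mono)
    also have "\<dots> \<le> X^2 * ((c*r/4 - q) * (7*c*r/4 + q))"
      using A B c rpos X2c by (intro mult_right_mono) (auto intro!: mult_nonneg_nonneg)
    finally have main: "c^2 * (r^2 * t^2 - q^2) \<le> X^2 * ((c*r/4 - q) * (7*c*r/4 + q))" .
    have "(X * (3/4*c*r + q))^2 \<le> (c * (r^2 + q))^2"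
    proof -
      have "(X * (3/4*c*r + q))^2 = X^2 * (c^2*r^2) - X^2 * ((c*r/4 - q) * (7*c*r/4 + q))"
        by (simp add: field_simps power2_eq_square)
      also have "\<dots> = c^2 * (X^2 * r^2) - X^2 * ((c*r/4 - q) * (7*c*r/4 + q))"
        by (simp add: algebra_simps)
      also have "\<dots> = c^2 * (r^2 + q)^2 + c^2 * (r^2 * t^2 - q^2) - X^2 * ((c*r/4 - q) * (7*c*r/4 + q))"
        unfolding X2 by (simp add: algebra_simps)
      also have "\<dots> \<le> (c * (r^2 + q))^2" using main by (simp add: power_mult_distrib)
      finally show ?thesis .
    qed
    moreover have nn: "c * (r^2 + q) \<ge> 0" using P c by simp
    ultimately have le: "X * (3/4*c*r + q) \<le> c * (r^2 + q)"
      by (rule power2_le_imp_le)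
    have Xp: "X > 0" using X c by linarith
    have "3/4*c*r + q \<le> c * (r^2 + q) / X"
      using le Xp by (simp add: pos_le_divide_eq mult.commute)
    then show ?thesis by simp
  qed
qed

lemma pair_event: assumes c: "c > 0" and w: "norm w < c/4"
  shows "inner v (clip (v + w) c) \<ge> norm v * min (norm v) (3/4*c) + inner v w"
proof -
  define r where "r = norm v"
  define q where "q = inner v w"
  define t where "t = norm w"
  define X where "X = norm (v + w)"
  have X2: "X^2 = r^2 + 2*q + t^2"
    by (simp add: X_def r_def q_def t_def power2_norm_eq_inner inner_add_left inner_add_right inner_commute)
  have Xle: "X \<le> r + t" unfolding X_def r_def t_def by (rule norm_triangle_ineq)
  have q: "\<bar>q\<bar> \<le> r * t" unfolding q_def r_def t_def by (rule Cauchy_Schwarz_ineq2)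
  have t0: "t \<ge> 0" "t < c/4" using w by (auto simp: t_def)
  have fX: "inner v (clip (v + w) c) = min 1 (c / X) * (r^2 + q)"
    by (simp add: clip_alt X_def[symmetric] r_def q_def power2_norm_eq_inner inner_add_right)
  have small: "inner v (clip (v + w) c) = r^2 + q" if "X \<le> c"
  proof (cases "X = 0")
    case True
    then have "v + w = 0" by (simp add: X_def)
    then have "w = - v" by (simp add: add_eq_0_iff2)
    then show ?thesis by (simp add: clip_def r_def q_def power2_norm_eq_inner)
  next
    case False
    then have "X > 0" by (simp add: X_def)
    then have "min 1 (c / X) = 1" using that by (simp add: min_def field_simps)
    then show ?thesis using fX by simp
  qed
  show ?thesis
  proof (cases "r \<le> 3/4*c")
    case True
    then have "X < c" using Xle t0 by linarith
    then have "inner v (clip (v + w) c) = r^2 + q" using small by simp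
    then show ?thesis using True by (simp add: r_def[symmetric] q_def[symmetric] min_def power2_eq_square)
  next
    case False
    then have mr: "min r (3/4*c) = 3/4*c" by simp
    show ?thesis
    proof (cases "X \<le> c")
      case True
      then have "inner v (clip (v + w) c) = r^2 + q" using small by simp
      moreover have "r * (3/4*c) \<le> r^2"
      proof -
        have "r \<ge> 0" by (simp add: r_def)
        then have "r * (3/4*c) \<le> r * r" using False by (intro mult_left_mono) auto
        then show ?thesis by (simp add: power2_eq_square)
      qed
      ultimately show ?thesis using mr by (simp add: r_def[symmetric] q_def[symmetric])
    next
      case Xc: False
      then have "min 1 (c / X) = c / X" using c by (simp add: min_def field_simps)
      then have e: "inner v (clip (v + w) c) = c / X * (r^2 + q)" using fX by simp
      have "X^2 * r^2 = (r^2 + q)^2 + (r^2 * t^2 - q^2)" unfolding X2 by (simp add: algebra_simps power2_eq_square)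
      then have "c / X * (r^2 + q) \<ge> 3/4*c*r + q"
        using scalar_key[of c X r t q] c Xc False t0 q by simp
      then show ?thesis using e mr by (simp add: r_def[symmetric] q_def[symmetric] algebra_simps)
    qed
  qed
qed



definition Qf :: "'a::euclidean_space \<Rightarrow> real" where
  "Qf z = (1 + (norm z)^2) * exp (norm z)"

lemma Qf_ge1: "Qf z \<ge> 1"
proof -
  have "1 \<le> 1 + (norm z)^2" by simp
  moreover have "1 \<le> exp (norm z)" by simp
  ultimately show ?thesis unfolding Qf_def using mult_mono[of 1 "1 + (norm z)^2" 1 "exp (norm z)"] by simp
qed

lemma Qf_ge_norm: "Qf z \<ge> norm z"
proof -
  have "norm z \<le> 1 + norm z" by simp
  also have "\<dots> \<le> exp (norm z)" by (rule exp_ge_add_one_self)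
  also have "\<dots> \<le> Qf z" unfolding Qf_def by simp
  finally show ?thesis .
qed

lemma Qf_measurable[measurable]: "Qf \<in> borel_measurable borel"
  unfolding Qf_def[abs_def] by measurable

lemma gauss_density_measurable[measurable]: "std_gauss_density \<in> borel_measurable borel"
  unfolding std_gauss_density_def[abs_def] by measurable

lemma gauss_density_nonneg: "std_gauss_density x \<ge> 0"
  unfolding std_gauss_density_def by simp

lemma scalar_tail: fixes t :: real
  shows "(1 + t^2) * exp t * exp (- (t^2) / 2) \<le> 8 * exp 2 * exp (- (t^2) / 4)"
proof -
  have "1 + t^2/8 \<le> exp (t^2/8)" by (rule exp_ge_add_one_self)
  then have a: "1 + t^2 \<le> 8 * exp (t^2/8)" by linarith
  have b: "t - t^2/8 \<le> 2"
  proof -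
    have "0 \<le> (t - 4)^2" by simp
    then show ?thesis by (simp add: power2_eq_square algebra_simps)
  qed
  have "(1 + t^2) * exp t * exp (- (t^2) / 2) \<le> 8 * exp (t^2/8) * (exp t * exp (- (t^2) / 2))"
    using a by (simp add: mult.assoc mult_right_mono)
  also have "\<dots> = 8 * exp ((t - t^2/8) + (- (t^2)/4))"
    by (simp add: exp_add[symmetric] algebra_simps)
  also have "\<dots> = 8 * (exp (t - t^2/8) * exp (- (t^2)/4))" by (simp only: exp_add)
  also have "\<dots> \<le> 8 * (exp 2 * exp (- (t^2)/4))"
    using b by simp
  finally show ?thesis by simp
qed

lemma real_gauss4_finite: "(\<integral>\<^sup>+ x. ennreal (exp (- (x^2) / 4)) \<partial>(lborel::real measure)) < \<infinity>"
proof -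
  have eq: "(\<lambda>x::real. exp (- (x^2) / 4)) = (\<lambda>x. sqrt (4 * pi) * normal_density 0 (sqrt 2) x)"
    by (rule ext) (simp add: normal_density_def real_sqrt_mult)
  have "integrable lborel (\<lambda>x::real. exp (- (x^2) / 4))"
    unfolding eq by (intro integrable_mult_right integrable_normal_density) auto
  from integrableD(2)[OF this] show ?thesis by (simp add: less_top)
qed

lemma eucl_gauss4_finite: "(\<integral>\<^sup>+ z. ennreal (exp (- ((norm z)^2) / 4)) \<partial>(lborel::'a::euclidean_space measure)) < \<infinity>"
proof -
  have eq: "ennreal (exp (- ((norm z)^2) / 4)) = (\<Prod>b\<in>Basis. ennreal (exp (- ((z \<bullet> b)^2) / 4)))" for z :: 'a
  proof -
    have "(norm z)^2 = inner z z" by (rule power2_norm_eq_inner)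
    also have "\<dots> = (\<Sum>b\<in>Basis. (z \<bullet> b) * (z \<bullet> b))" by (rule euclidean_inner)
    also have "\<dots> = (\<Sum>b\<in>Basis. (z \<bullet> b)^2)" by (simp add: power2_eq_square)
    finally have "(norm z)^2 = (\<Sum>b\<in>Basis. (z \<bullet> b)^2)" .
    then have "- ((norm z)^2) / 4 = (\<Sum>b\<in>Basis. - ((z \<bullet> b)^2) / 4)"
      by (simp add: sum_divide_distrib sum_negf)
    then have "exp (- ((norm z)^2) / 4) = (\<Prod>b\<in>Basis. exp (- ((z \<bullet> b)^2) / 4))"
      by (simp add: exp_sum)
    then show ?thesis by (simp add: prod_ennreal)
  qed
  have "(\<integral>\<^sup>+ z. ennreal (exp (- ((norm z)^2) / 4)) \<partial>(lborel::'a measure))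
      = (\<Prod>b\<in>(Basis::'a set). (\<integral>\<^sup>+ x. ennreal (exp (- (x^2) / 4)) \<partial>lborel))"
    unfolding eq by (rule nn_integral_lborel_prod) auto
  also have "\<dots> < \<infinity>"
    using real_gauss4_finite by (simp add: power_less_top_ennreal)
  finally show ?thesis .
qed

lemma gauss_Qf_finite: "(\<integral>\<^sup>+ z. ennreal (std_gauss_density z * Qf z) \<partial>(lborel::'a::euclidean_space measure)) < \<infinity>"
proof -
  define K where "K = (2 * pi) powr (- real DIM('a) / 2) * (8 * exp 2)"
  have "std_gauss_density z * Qf z \<le> K * exp (- ((norm z)^2) / 4)" for z :: 'a
  proof -
    have "std_gauss_density z * Qf z = (2 * pi) powr (- real DIM('a) / 2) *
        ((1 + (norm z)^2) * exp (norm z) * exp (- ((norm z)^2) / 2))"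
      by (simp add: std_gauss_density_def Qf_def)
    also have "\<dots> \<le> (2 * pi) powr (- real DIM('a) / 2) * (8 * exp 2 * exp (- ((norm z)^2) / 4))"
      by (intro mult_left_mono scalar_tail) simp
    finally show ?thesis by (simp add: K_def)
  qed
  note bnd = this
  have K0: "K \<ge> 0" by (simp add: K_def)
  have "(\<integral>\<^sup>+ z. ennreal (std_gauss_density z * Qf z) \<partial>(lborel::'a measure))
      \<le> (\<integral>\<^sup>+ z. ennreal K * ennreal (exp (- ((norm z)^2) / 4)) \<partial>(lborel::'a measure))"
  proof (rule nn_integral_mono)
    fix z :: 'a
    assume "z \<in> space lborel"
    have "ennreal (std_gauss_density z * Qf z) \<le> ennreal (K * exp (- ((norm z)^2) / 4))"
      by (rule ennreal_leI[OF bnd])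
    also have "\<dots> = ennreal K * ennreal (exp (- ((norm z)^2) / 4))"
      by (rule ennreal_mult[OF K0]) simp
    finally show "ennreal (std_gauss_density z * Qf z) \<le> ennreal K * ennreal (exp (- ((norm z)^2) / 4))" .
  qed
  also have "\<dots> = ennreal K * (\<integral>\<^sup>+ z. ennreal (exp (- ((norm z)^2) / 4)) \<partial>(lborel::'a measure))"
    by (rule nn_integral_cmult) simp
  also have "\<dots> < \<infinity>" using eucl_gauss4_finite[where 'a='a]
    by (simp add: ennreal_mult_less_top)
  finally show ?thesis .
qed

lemma std_gauss_finite: "finite_measure (std_gauss :: 'a::euclidean_space measure)"
proof
  have "emeasure (std_gauss :: 'a measure) (space std_gauss) = (\<integral>\<^sup>+ z. ennreal (std_gauss_density z) \<partial>(lborel::'a measure))"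
    unfolding std_gauss_def by (simp add: emeasure_density)
  also have "\<dots> \<le> (\<integral>\<^sup>+ z. ennreal (std_gauss_density z * Qf z) \<partial>(lborel::'a measure))"
    by (intro nn_integral_mono ennreal_leI) (use mult_left_mono[OF Qf_ge1 gauss_density_nonneg] in simp)
  also have "\<dots> < \<infinity>" by (rule gauss_Qf_finite)
  finally show "emeasure (std_gauss :: 'a measure) (space std_gauss) \<noteq> \<infinity>" by simp
qed

lemma space_std_gauss[simp]: "space std_gauss = UNIV" and sets_std_gauss[simp]: "sets std_gauss = sets borel"
  by (simp_all add: std_gauss_def)

lemma integrable_gauss_Qf: "integrable (std_gauss :: 'a::euclidean_space measure) Qf"
proof -
  have "integrable (lborel::'a measure) (\<lambda>z. std_gauss_density z *\<^sub>R Qf z)"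
  proof (rule integrableI_bounded)
    show "(\<integral>\<^sup>+ z. ennreal (norm (std_gauss_density z *\<^sub>R Qf z)) \<partial>(lborel::'a measure)) < \<infinity>"
    proof -
      have "\<bar>std_gauss_density z * Qf z\<bar> = std_gauss_density z * Qf z" for z :: 'a
        by (rule abs_of_nonneg[OF mult_nonneg_nonneg[OF gauss_density_nonneg order.trans[OF zero_le_one Qf_ge1]]])
      then show ?thesis using gauss_Qf_finite by simp
    qed
  qed simp
  then show ?thesis unfolding std_gauss_def
    by (subst integrable_density) (auto simp: gauss_density_nonneg)
qed



lemma clip_measurable[measurable]: "(\<lambda>g::'a::euclidean_space. clip g c) \<in> borel_measurable borel"
  unfolding clip_alt[abs_def] by measurable

lemma gauss_shift: "std_gauss_density (z - y) = std_gauss_density z * exp (inner z y - (norm y)^2 / 2)"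
proof -
  have "(norm (z - y))^2 = (norm z)^2 - 2 * inner z y + (norm y)^2"
    by (simp add: power2_norm_eq_inner inner_diff_left inner_diff_right inner_commute)
  then have "- (norm (z - y))\<^sup>2 / 2 = - (norm z)\<^sup>2 / 2 + (inner z y - (norm y)^2 / 2)"
    by (simp add: field_simps)
  then have "exp (- (norm (z - y))\<^sup>2 / 2) = exp (- (norm z)\<^sup>2 / 2) * exp (inner z y - (norm y)^2 / 2)"
    by (simp only: exp_add)
  then show ?thesis unfolding std_gauss_density_def by simp
qed

lemma gauss_neg: "std_gauss_density (- z) = std_gauss_density z"
  unfolding std_gauss_density_def by simp

lemma integral_std_gauss: fixes F :: "'a::euclidean_space \<Rightarrow> real"
  assumes [measurable]: "F \<in> borel_measurable borel"
  shows "(\<integral>z. F z \<partial>std_gauss) = (\<integral>z. std_gauss_density z * F z \<partial>lborel)"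
  unfolding std_gauss_def by (subst integral_density) (auto simp: gauss_density_nonneg)

lemma lborel_translate_integral: fixes g :: "'a::euclidean_space \<Rightarrow> real"
  assumes [measurable]: "g \<in> borel_measurable borel"
  shows "(\<integral>z. g z \<partial>lborel) = (\<integral>z. g (y + z) \<partial>lborel)"
proof -
  have "(\<integral>z. g z \<partial>lborel) = (\<integral>z. g z \<partial>(distr lborel borel ((+) y)))"
    by (simp add: lborel_distr_plus)
  also have "\<dots> = (\<integral>z. g (y + z) \<partial>lborel)"
    by (rule integral_distr) auto
  finally show ?thesis .
qed

lemma lborel_distr_uminus: "distr lborel borel uminus = (lborel :: 'a::euclidean_space measure)"
proof -
  note e = lborel_affine[of "-1::real" "0::'a"]
  have "(\<lambda>x::'a. 0 + (-1) *\<^sub>R x) = uminus" by auto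
  with e show ?thesis by (simp add: density_1)
qed

lemma lborel_neg_integral: fixes g :: "'a::euclidean_space \<Rightarrow> real"
  assumes [measurable]: "g \<in> borel_measurable borel"
  shows "(\<integral>z. g z \<partial>lborel) = (\<integral>z. g (- z) \<partial>lborel)"
proof -
  have "(\<integral>z. g z \<partial>lborel) = (\<integral>z. g z \<partial>(distr lborel borel uminus))"
    by (simp add: lborel_distr_uminus)
  also have "\<dots> = (\<integral>z. g (- z) \<partial>lborel)"
    by (rule integral_distr) auto
  finally show ?thesis .
qed

lemma gauss_translate: fixes F :: "'a::euclidean_space \<Rightarrow> real" and k :: real
  assumes [measurable]: "F \<in> borel_measurable borel"
  shows "(\<integral>z. F (k *\<^sub>R y + k *\<^sub>R z) \<partial>std_gauss)
       = (\<integral>z. exp (inner z y - (norm y)^2 / 2) * F (k *\<^sub>R z) \<partial>std_gauss)"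
proof -
  have "(\<integral>z. F (k *\<^sub>R y + k *\<^sub>R z) \<partial>std_gauss) = (\<integral>z. std_gauss_density z * F (k *\<^sub>R y + k *\<^sub>R z) \<partial>lborel)"
    by (rule integral_std_gauss) measurable
  also have "\<dots> = (\<integral>z. std_gauss_density ((y + z) - y) * F (k *\<^sub>R (y + z)) \<partial>lborel)"
    by (simp add: scaleR_add_right)
  also have "\<dots> = (\<integral>z. std_gauss_density (z - y) * F (k *\<^sub>R z) \<partial>lborel)"
    by (rule lborel_translate_integral[symmetric]) measurable
  also have "\<dots> = (\<integral>z. std_gauss_density z * (exp (inner z y - (norm y)^2 / 2) * F (k *\<^sub>R z)) \<partial>lborel)"
    by (simp add: gauss_shift mult.assoc)
  also have "\<dots> = (\<integral>z. exp (inner z y - (norm y)^2 / 2) * F (k *\<^sub>R z) \<partial>std_gauss)"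
    by (rule integral_std_gauss[symmetric]) measurable
  finally show ?thesis .
qed

lemma gauss_symm: fixes F :: "'a::euclidean_space \<Rightarrow> real"
  assumes [measurable]: "F \<in> borel_measurable borel"
  shows "(\<integral>z. F (- z) \<partial>std_gauss) = (\<integral>z. F z \<partial>std_gauss)"
proof -
  have "(\<integral>z. F (- z) \<partial>std_gauss) = (\<integral>z. std_gauss_density z * F (- z) \<partial>lborel)"
    by (rule integral_std_gauss) measurable
  also have "\<dots> = (\<integral>z. std_gauss_density (- z) * F (- z) \<partial>lborel)"
    by (simp add: gauss_neg)
  also have "\<dots> = (\<integral>z. std_gauss_density z * F z \<partial>lborel)"
    using lborel_neg_integral[of "\<lambda>z. std_gauss_density z * F z"] by simp
  also have "\<dots> = (\<integral>z. F z \<partial>std_gauss)"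
    by (rule integral_std_gauss[symmetric]) measurable
  finally show ?thesis .
qed

lemma R_bound: fixes a s T :: real
  assumes "\<bar>a\<bar> \<le> T * s" "0 \<le> s" "s \<le> 1" "0 \<le> T"
  shows "\<bar>exp (a - s^2/2) - 1 - a\<bar> \<le> 6 * s^2 * ((1 + T^2) * exp T)"
proof -
  define b where "b = a - s^2/2"
  obtain \<theta> where th: "\<bar>\<theta>\<bar> \<le> \<bar>b\<bar>" "exp b = (\<Sum>m<2. b^m / fact m) + exp \<theta> / fact 2 * b^2"
    using Maclaurin_exp_le[of b 2] by blast
  have eb: "exp b - 1 - b = exp \<theta> / 2 * b^2" using th(2) by (simp add: numeral_2_eq_2)
  have Ts: "T * s \<le> T" using assms by (simp add: mult_left_le)
  have s2: "s^2 \<le> 1" using assms by (simp add: power_le_one)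
  have s4: "s^4 \<le> s^2"
  proof -
    have "s^4 = s^2 * s^2" by (simp add: power2_eq_square power4_eq_xxxx)
    also have "\<dots> \<le> s^2 * 1" using s2 by (intro mult_left_mono) auto
    finally show ?thesis by simp
  qed
  have a1: "\<bar>a\<bar> \<le> T" using assms(1) Ts by linarith
  have "b \<le> T + 1" unfolding b_def using a1 abs_ge_self[of a] zero_le_power2[of s] by linarith
  moreover have "- b \<le> T + 1" unfolding b_def using a1 abs_ge_minus_self[of a] s2 by linarith
  ultimately have babs: "\<bar>b\<bar> \<le> T + 1" by (simp add: abs_le_iff)
  have "exp \<theta> \<le> exp (T + 1)" using th(1) babs by simp
  also have "\<dots> = exp T * exp 1" by (simp add: exp_add)
  also have "\<dots> \<le> exp T * 3" using exp_le by simp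
  finally have eth: "exp \<theta> \<le> 3 * exp T" by simp
  have "b^2 \<le> 2 * a^2 + s^4/2"
  proof -
    have "0 \<le> (a + s^2/2)^2" by simp
    then show ?thesis unfolding b_def by (simp add: power2_eq_square power4_eq_xxxx algebra_simps)
  qed
  also have "\<dots> \<le> 2 * (T * s)^2 + s^2/2"
  proof -
    have "a^2 \<le> (T * s)^2" using assms by (simp add: abs_le_square_iff[symmetric] abs_mult)
    then show ?thesis using s4 by simp
  qed
  also have "\<dots> = s^2 * (2 * T^2 + 1/2)" by (simp add: power_mult_distrib algebra_simps)
  finally have b2: "b^2 \<le> s^2 * (2 * T^2 + 1/2)" .
  have "\<bar>exp b - 1 - b\<bar> = exp \<theta> / 2 * b^2" unfolding eb by simp
  also have "\<dots> \<le> (3 * exp T) / 2 * (s^2 * (2 * T^2 + 1/2))"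
    using eth b2 by (intro mult_mono divide_right_mono) auto
  finally have e1: "\<bar>exp b - 1 - b\<bar> \<le> 3/2 * exp T * s^2 * (2 * T^2 + 1/2)" by simp
  have eqb: "exp (a - s^2/2) - 1 - a = (exp b - 1 - b) + (- (s^2/2))" unfolding b_def by simp
  have "\<bar>exp (a - s^2/2) - 1 - a\<bar> \<le> \<bar>exp b - 1 - b\<bar> + s^2/2"
    unfolding eqb using abs_triangle_ineq[of "exp b - 1 - b" "- (s^2/2)"] by simp
  also have "\<dots> \<le> 3/2 * exp T * s^2 * (2 * T^2 + 1/2) + s^2/2 * exp T"
  proof -
    have "1 \<le> exp T" using assms(4) by simp
    then have "s^2/2 * 1 \<le> s^2/2 * exp T" by (intro mult_left_mono) auto
    then show ?thesis using e1 by linarith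
  qed
  also have "\<dots> = s^2 * exp T * (3 * T^2 + 5/4)" by (simp add: field_simps)
  also have "\<dots> \<le> s^2 * exp T * (6 * (1 + T^2))"
    by (intro mult_left_mono) auto
  also have "\<dots> = 6 * s^2 * ((1 + T^2) * exp T)" by (simp add: algebra_simps)
  finally show ?thesis .
qed



lemma meas_gauss[simp]: "measurable (std_gauss :: 'a::euclidean_space measure) N = measurable borel N"
  by (rule measurable_cong_sets) simp_all

lemma intQ: fixes g :: "'a::euclidean_space \<Rightarrow> real"
  assumes [measurable]: "g \<in> borel_measurable borel" and b: "\<And>z. \<bar>g z\<bar> \<le> B * Qf z"
  shows "integrable std_gauss g"
proof (rule Bochner_Integration.integrable_bound)
  show "integrable std_gauss (\<lambda>z. B * Qf z)" by (intro integrable_mult_right integrable_gauss_Qf)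
  show "g \<in> borel_measurable std_gauss" by simp
  show "AE z in std_gauss. norm (g z) \<le> norm (B * Qf z)"
  proof (rule AE_I2)
    fix z
    have "\<bar>g z\<bar> \<le> \<bar>B * Qf z\<bar>" using b[of z] by linarith
    then show "norm (g z) \<le> norm (B * Qf z)" by simp
  qed
qed

lemma absQ: fixes g :: "'a::euclidean_space \<Rightarrow> real"
  assumes [measurable]: "g \<in> borel_measurable borel" and b: "\<And>z. \<bar>g z\<bar> \<le> B * Qf z"
  shows "\<bar>\<integral>z. g z \<partial>std_gauss\<bar> \<le> B * (\<integral>z. Qf z \<partial>(std_gauss::'a measure))"
proof -
  have "\<bar>\<integral>z. g z \<partial>std_gauss\<bar> \<le> (\<integral>z. B * Qf z \<partial>(std_gauss::'a measure))"
  proof -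
    have ig: "integrable std_gauss g" by (rule intQ[OF _ b]) simp
    have "\<bar>\<integral>z. g z \<partial>std_gauss\<bar> \<le> (\<integral>z. norm (g z) \<partial>std_gauss)"
      using integral_norm_bound[of std_gauss g] by simp
    also have "\<dots> \<le> (\<integral>z. B * Qf z \<partial>(std_gauss::'a measure))"
      by (rule Bochner_Integration.integral_mono) (use ig b in \<open>auto intro: integrable_mult_right integrable_gauss_Qf\<close>)
    finally show ?thesis .
  qed
  then show ?thesis by simp
qed

lemma J_nonneg: "0 \<le> (\<integral>z. Qf z \<partial>(std_gauss::'a::euclidean_space measure))"
  using Qf_ge1 by (intro integral_nonneg_AE AE_I2) (auto intro: order.trans[OF zero_le_one])

lemma hB:
  fixes c k :: real and v x :: "'a::euclidean_space"
  assumes c: "c > 0" and k: "k > 0"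
  defines "f \<equiv> \<lambda>u. inner v (clip u c)"
  defines "M \<equiv> norm v * c"
  defines "J \<equiv> (\<integral>z. Qf z \<partial>(std_gauss::'a measure))"
  defines "a \<equiv> (\<integral>z. f (v + k *\<^sub>R z) *\<^sub>R z \<partial>(std_gauss::'a measure))"
  shows "(\<integral>z. f (v + x + k *\<^sub>R z) \<partial>std_gauss) \<ge>
      (\<integral>z. f (v + k *\<^sub>R z) \<partial>std_gauss) + inner a x / k - 6 * M * J * (norm x)^2 / k^2"
proof -
  have fm[measurable]: "f \<in> borel_measurable borel" unfolding f_def by measurable
  have fb: "\<bar>f u\<bar> \<le> M" for u unfolding f_def M_def by (rule f_bound[OF c])
  have M0: "M \<ge> 0" unfolding M_def using c by simp
  have J0: "J \<ge> 0" unfolding J_def by (rule J_nonneg)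
  have MQ: "\<bar>f u\<bar> \<le> M * Qf z" for u z
  proof -
    have "M * 1 \<le> M * Qf z" using M0 Qf_ge1 by (intro mult_left_mono) auto
    then show ?thesis using fb[of u] by simp
  qed
  define y where "y = (1 / k) *\<^sub>R x"
  define s where "s = norm y"
  have xy: "x = k *\<^sub>R y" unfolding y_def using k by simp
  have s0: "s \<ge> 0" unfolding s_def by simp
  have ss: "s^2 = (norm x)^2 / k^2" unfolding s_def y_def using k
    by (simp add: power_divide abs_of_pos)
  define h0 where "h0 = (\<integral>z. f (v + k *\<^sub>R z) \<partial>(std_gauss::'a measure))"
  define hx where "hx = (\<integral>z. f (v + x + k *\<^sub>R z) \<partial>(std_gauss::'a measure))"
  define L where "L = (\<integral>z. f (v + k *\<^sub>R z) * inner z y \<partial>(std_gauss::'a measure))"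
  have inta: "integrable (std_gauss::'a measure) (\<lambda>z. f (v + k *\<^sub>R z) *\<^sub>R z)"
  proof (rule Bochner_Integration.integrable_bound)
    show "integrable std_gauss (\<lambda>z. M * Qf z)" by (intro integrable_mult_right integrable_gauss_Qf)
    show "(\<lambda>z. f (v + k *\<^sub>R z) *\<^sub>R z) \<in> borel_measurable (std_gauss::'a measure)" by simp
    show "AE z in std_gauss. norm (f (v + k *\<^sub>R z) *\<^sub>R z) \<le> norm (M * Qf z)"
    proof (rule AE_I2)
      fix z :: 'a
      have "norm (f (v + k *\<^sub>R z) *\<^sub>R z) = \<bar>f (v + k *\<^sub>R z)\<bar> * norm z" by simp
      also have "\<dots> \<le> M * Qf z" using fb Qf_ge_norm[of z] M0
        by (intro mult_mono) auto
      also have "\<dots> \<le> norm (M * Qf z)" by simp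
      finally show "norm (f (v + k *\<^sub>R z) *\<^sub>R z) \<le> norm (M * Qf z)" .
    qed
  qed
  have La: "inner a x / k = L"
  proof -
    have "inner a x / k = inner a y" unfolding xy using k by simp
    also have "\<dots> = (\<integral>z. inner (f (v + k *\<^sub>R z) *\<^sub>R z) y \<partial>std_gauss)"
      unfolding a_def by (subst integral_inner_left) (use inta in auto)
    also have "\<dots> = L" unfolding L_def by simp
    finally show ?thesis .
  qed
  have normL: "\<bar>L\<bar> \<le> M * J * s"
  proof -
    have "\<bar>L\<bar> \<le> (M * s) * J" unfolding L_def J_def
    proof (rule absQ)
      show "(\<lambda>z. f (v + k *\<^sub>R z) * inner z y) \<in> borel_measurable borel" by measurable
      fix z :: 'a
      have "\<bar>f (v + k *\<^sub>R z) * inner z y\<bar> = \<bar>f (v + k *\<^sub>R z)\<bar> * \<bar>inner z y\<bar>" by (simp add: abs_mult)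
      also have "\<dots> \<le> M * (norm z * s)"
        using fb Cauchy_Schwarz_ineq2[of z y] M0 unfolding s_def by (intro mult_mono) auto
      also have "\<dots> \<le> M * (Qf z * s)"
        using Qf_ge_norm[of z] M0 s0 by (intro mult_left_mono mult_right_mono) auto
      finally show "\<bar>f (v + k *\<^sub>R z) * inner z y\<bar> \<le> M * s * Qf z" by (simp add: algebra_simps)
    qed
    then show ?thesis by (simp add: algebra_simps)
  qed
  have h0b: "\<bar>h0\<bar> \<le> M * J" unfolding h0_def J_def
    by (rule absQ) (auto intro: MQ)
  have hxb: "\<bar>hx\<bar> \<le> M * J" unfolding hx_def J_def
    by (rule absQ) (auto intro: MQ)
  have main: "hx \<ge> h0 + L - 6 * M * J * s^2"
  proof (cases "s \<le> 1")
    case True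
    define E where "E = (\<lambda>z::'a. exp (inner z y - (norm y)^2 / 2))"
    have E_le: "E z \<le> Qf z" for z
    proof -
      have "inner z y \<le> norm z * norm y" by (rule norm_cauchy_schwarz)
      also have "\<dots> \<le> norm z * 1" using True unfolding s_def by (intro mult_left_mono) auto
      finally have "inner z y - (norm y)^2 / 2 \<le> norm z" using zero_le_power2[of "norm y"] by linarith
      then have "E z \<le> exp (norm z)" unfolding E_def by simp
      also have "\<dots> \<le> Qf z" unfolding Qf_def by simp
      finally show ?thesis .
    qed
    have hx_eq: "hx = (\<integral>z. E z * f (v + k *\<^sub>R z) \<partial>std_gauss)"
    proof -
      have "hx = (\<integral>z. (\<lambda>u. f (v + u)) (k *\<^sub>R y + k *\<^sub>R z) \<partial>std_gauss)"
        unfolding hx_def xy by (simp add: add.assoc)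
      also have "\<dots> = (\<integral>z. exp (inner z y - (norm y)^2 / 2) * (\<lambda>u. f (v + u)) (k *\<^sub>R z) \<partial>std_gauss)"
        by (rule gauss_translate) measurable
      finally show ?thesis unfolding E_def by simp
    qed
    have i1: "integrable std_gauss (\<lambda>z. E z * f (v + k *\<^sub>R z))"
    proof (rule intQ)
      show "(\<lambda>z. E z * f (v + k *\<^sub>R z)) \<in> borel_measurable borel" unfolding E_def by measurable
      fix z :: 'a
      have "\<bar>E z * f (v + k *\<^sub>R z)\<bar> = E z * \<bar>f (v + k *\<^sub>R z)\<bar>" unfolding E_def by (simp add: abs_mult)
      also have "\<dots> \<le> Qf z * M" using E_le[of z] fb M0 order.trans[OF zero_le_one Qf_ge1[of z]]
        by (intro mult_mono) (auto simp: E_def)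
      finally show "\<bar>E z * f (v + k *\<^sub>R z)\<bar> \<le> M * Qf z" by (simp add: mult.commute)
    qed
    have i2: "integrable std_gauss (\<lambda>z. f (v + k *\<^sub>R z))"
      by (rule intQ[where B=M]) (auto intro: MQ)
    have i3: "integrable std_gauss (\<lambda>z. f (v + k *\<^sub>R z) * inner z y)"
    proof (rule intQ[where B="M * s"])
      show "(\<lambda>z. f (v + k *\<^sub>R z) * inner z y) \<in> borel_measurable borel" by measurable
      fix z :: 'a
      have "\<bar>f (v + k *\<^sub>R z) * inner z y\<bar> = \<bar>f (v + k *\<^sub>R z)\<bar> * \<bar>inner z y\<bar>" by (simp add: abs_mult)
      also have "\<dots> \<le> M * (norm z * s)"
        using fb Cauchy_Schwarz_ineq2[of z y] M0 unfolding s_def by (intro mult_mono) auto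
      also have "\<dots> \<le> M * (Qf z * s)"
        using Qf_ge_norm[of z] M0 s0 by (intro mult_left_mono mult_right_mono) auto
      finally show "\<bar>f (v + k *\<^sub>R z) * inner z y\<bar> \<le> M * s * Qf z" by (simp add: algebra_simps)
    qed
    have "hx - h0 - L = (\<integral>z. E z * f (v + k *\<^sub>R z) - f (v + k *\<^sub>R z) - f (v + k *\<^sub>R z) * inner z y \<partial>std_gauss)"
      unfolding hx_eq h0_def L_def using i1 i2 i3 by simp
    also have "\<dots> = (\<integral>z. f (v + k *\<^sub>R z) * (exp (inner z y - s^2/2) - 1 - inner z y) \<partial>std_gauss)"
      unfolding E_def s_def by (simp add: algebra_simps)
    finally have D: "hx - h0 - L = (\<integral>z. f (v + k *\<^sub>R z) * (exp (inner z y - s^2/2) - 1 - inner z y) \<partial>std_gauss)" .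
    have "\<bar>hx - h0 - L\<bar> \<le> (6 * s^2 * M) * J" unfolding D J_def
    proof (rule absQ)
      show "(\<lambda>z. f (v + k *\<^sub>R z) * (exp (inner z y - s^2/2) - 1 - inner z y)) \<in> borel_measurable borel"
        by measurable
      fix z :: 'a
      have R: "\<bar>exp (inner z y - s^2/2) - 1 - inner z y\<bar> \<le> 6 * s^2 * ((1 + (norm z)^2) * exp (norm z))"
        using Cauchy_Schwarz_ineq2[of z y] True s0 unfolding s_def
        by (intro R_bound) auto
      have "\<bar>f (v + k *\<^sub>R z) * (exp (inner z y - s^2/2) - 1 - inner z y)\<bar>
          = \<bar>f (v + k *\<^sub>R z)\<bar> * \<bar>exp (inner z y - s^2/2) - 1 - inner z y\<bar>" by (simp add: abs_mult)
      also have "\<dots> \<le> M * (6 * s^2 * Qf z)"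
        using fb R M0 unfolding Qf_def by (intro mult_mono) auto
      finally show "\<bar>f (v + k *\<^sub>R z) * (exp (inner z y - s^2/2) - 1 - inner z y)\<bar> \<le> 6 * s^2 * M * Qf z"
        by (simp add: algebra_simps)
    qed
    then have "- (hx - h0 - L) \<le> 6 * s^2 * M * J" by (rule abs_le_D2)
    then show ?thesis by (simp add: algebra_simps)
  next
    case False
    have "M * J * s \<le> M * J * s^2"
    proof -
      have "s \<le> s^2" using False by (simp add: power2_eq_square)
      then show ?thesis using M0 J0 by (intro mult_left_mono) auto
    qed
    moreover have "M * J \<le> M * J * s^2"
    proof -
      have "1 * 1 \<le> s * s" using False by (intro mult_mono) auto
      then have "1 \<le> s^2" by (simp add: power2_eq_square)
      then have "M * J * 1 \<le> M * J * s^2" using M0 J0 by (intro mult_left_mono) auto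
      then show ?thesis by simp
    qed
    moreover have "- hx \<le> M * J" by (rule abs_le_D2[OF hxb])
    moreover have "h0 \<le> M * J" by (rule abs_le_D1[OF h0b])
    moreover have "L \<le> M * J * s" by (rule abs_le_D1[OF normL])
    moreover have "6 * M * J * s^2 = 6 * (M * J * s^2)" by simp
    moreover have "0 \<le> M * J * s^2" using M0 J0 by simp
    ultimately show ?thesis by linarith
  qed
  have "6 * M * J * (norm x)^2 / k^2 = 6 * M * J * s^2" by (simp add: ss)
  then show ?thesis
    using main La unfolding hx_def h0_def by linarith
qed

lemma h0_lower:
  fixes c k :: real and v :: "'a::euclidean_space"
  assumes c: "c > 0" and k: "k > 0"
  shows "(\<integral>z. inner v (clip (v + k *\<^sub>R z) c) \<partial>std_gauss) \<ge>
     norm v * min (norm v) (3 / 4 * c) * measure (std_gauss :: 'a measure) {z. norm (k *\<^sub>R z) < c / 4}"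
proof -
  interpret G: finite_measure "std_gauss :: 'a measure" by (rule std_gauss_finite)
  define f where "f = (\<lambda>u. inner v (clip u c))"
  define m where "m = norm v * min (norm v) (3 / 4 * c)"
  define E where "E = {z::'a. norm (k *\<^sub>R z) < c / 4}"
  have fm[measurable]: "f \<in> borel_measurable borel" unfolding f_def by measurable
  have fb: "\<bar>f u\<bar> \<le> norm v * c" for u unfolding f_def by (rule f_bound[OF c])
  have Em: "E \<in> sets (std_gauss :: 'a measure)" unfolding E_def by simp
  have i1: "integrable (std_gauss :: 'a measure) (\<lambda>z. f (v + k *\<^sub>R z))"
    by (rule G.integrable_const_bound[where B="norm v * c"]) (auto intro: fb)
  have i2: "integrable (std_gauss :: 'a measure) (\<lambda>z. f (v - k *\<^sub>R z))"
    by (rule G.integrable_const_bound[where B="norm v * c"]) (auto intro: fb)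
  have sym: "(\<integral>z. f (v - k *\<^sub>R z) \<partial>std_gauss) = (\<integral>z. f (v + k *\<^sub>R z) \<partial>(std_gauss :: 'a measure))"
    using gauss_symm[of "\<lambda>z. f (v + k *\<^sub>R z)"] by simp
  have pw: "2 * m * indicator E z \<le> f (v + k *\<^sub>R z) + f (v - k *\<^sub>R z)" for z
  proof (cases "z \<in> E")
    case True
    then have n1: "norm (k *\<^sub>R z) < c / 4" unfolding E_def by simp
    then have n2: "norm (- (k *\<^sub>R z)) < c / 4" by simp
    have "f (v + k *\<^sub>R z) \<ge> m + inner v (k *\<^sub>R z)" unfolding f_def m_def by (rule pair_event[OF c n1])
    moreover have "f (v + - (k *\<^sub>R z)) \<ge> m + inner v (- (k *\<^sub>R z))" unfolding f_def m_def by (rule pair_event[OF c n2])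
    ultimately show ?thesis using True by simp
  next
    case False
    then show ?thesis using pair_nonneg[OF c, of v "k *\<^sub>R z"] unfolding f_def by simp
  qed
  have "2 * m * measure std_gauss E = (\<integral>z. 2 * m * indicator E z \<partial>(std_gauss :: 'a measure))"
    using Em by simp
  also have "\<dots> \<le> (\<integral>z. f (v + k *\<^sub>R z) + f (v - k *\<^sub>R z) \<partial>std_gauss)"
  proof (rule Bochner_Integration.integral_mono)
    have Efin: "emeasure std_gauss E < \<top>" using G.emeasure_finite[of E] by (simp add: less_top[symmetric])
    show "integrable std_gauss (\<lambda>z. 2 * m * indicator E z)"
      using Em Efin by (intro integrable_mult_right integrable_real_indicator) auto
    show "integrable std_gauss (\<lambda>z. f (v + k *\<^sub>R z) + f (v - k *\<^sub>R z))" using i1 i2 by simp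
    show "2 * m * indicator E z \<le> f (v + k *\<^sub>R z) + f (v - k *\<^sub>R z)" for z by (rule pw)
  qed
  also have "\<dots> = 2 * (\<integral>z. f (v + k *\<^sub>R z) \<partial>std_gauss)"
    using i1 i2 sym by simp
  finally show ?thesis unfolding f_def m_def E_def by simp
qed



theorem theorem6:
  fixes c :: real and v :: "'a::euclidean_space"
  assumes "c > 0"
  shows "\<exists>C. \<forall>(k::real) (p::'a \<Rightarrow> real). k > 0 \<longrightarrow> zero_mean_finite_var_density p \<longrightarrow>
    (\<integral> z. inner v (clip (v + fst z + k *\<^sub>R snd z) c)
        \<partial>(density lborel (\<lambda>x. ennreal (p x)) \<Otimes>\<^sub>M std_gauss))
    \<ge> norm v * min (norm v) (3 / 4 * c) * measure (std_gauss :: 'a measure) {z. norm (k *\<^sub>R z) < c / 4}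
      - C * (\<integral> x. (norm x)\<^sup>2 \<partial>density lborel (\<lambda>x. ennreal (p x))) / k\<^sup>2"
proof -
  note c = assms
  define J where "J = (\<integral>z. Qf z \<partial>(std_gauss::'a measure))"
  show ?thesis
  proof (intro exI[of _ "6 * (norm v * c) * J"] allI impI)
    fix k :: real and p :: "'a \<Rightarrow> real"
    assume k: "k > 0" and p: "zero_mean_finite_var_density p"
    define N where "N = density lborel (\<lambda>x. ennreal (p x))"
    have pm[measurable]: "p \<in> borel_measurable borel" and p1: "(\<integral>\<^sup>+ x. ennreal (p x) \<partial>lborel) = 1"
      and ix: "integrable N (\<lambda>x. x)" and mx: "(\<integral>x. x \<partial>N) = 0" and i2: "integrable N (\<lambda>x. (norm x)^2)"
      using p unfolding zero_mean_finite_var_density_def N_def by auto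
    have sN[simp]: "sets N = sets borel" "space N = UNIV" unfolding N_def by simp_all
    interpret N: prob_space N
    proof (rule prob_spaceI)
      show "emeasure N (space N) = 1" unfolding N_def using p1 by (simp add: emeasure_density)
    qed
    interpret G: finite_measure "std_gauss::'a measure" by (rule std_gauss_finite)
    interpret P: pair_sigma_finite N "std_gauss::'a measure"
      unfolding pair_sigma_finite_def using N.sigma_finite_measure_axioms G.sigma_finite_measure_axioms by simp
    interpret PF: finite_measure "N \<Otimes>\<^sub>M (std_gauss::'a measure)"
      by (intro finite_measure_pair_measure) unfold_locales
    define F where "F = (\<lambda>z::'a \<times> 'a. inner v (clip (v + fst z + k *\<^sub>R snd z) c))"
    have sP: "sets (N \<Otimes>\<^sub>M (std_gauss::'a measure)) = sets (borel \<Otimes>\<^sub>M borel)"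
      by (intro sets_pair_measure_cong) simp_all
    have Fm: "F \<in> borel_measurable (N \<Otimes>\<^sub>M (std_gauss::'a measure))"
    proof -
      have "F \<in> borel_measurable (borel \<Otimes>\<^sub>M borel)" unfolding F_def by measurable
      then show ?thesis by (subst measurable_cong_sets[OF sP refl])
    qed
    have iF: "integrable (N \<Otimes>\<^sub>M (std_gauss::'a measure)) F"
    proof (rule PF.integrable_const_bound[where B="norm v * c"])
      show "AE x in N \<Otimes>\<^sub>M std_gauss. norm (F x) \<le> norm v * c"
        by (auto simp: F_def f_bound[OF c])
    qed (rule Fm)
    define h where "h = (\<lambda>x. \<integral>z. inner v (clip (v + x + k *\<^sub>R z) c) \<partial>(std_gauss::'a measure))"
    define h0 where "h0 = (\<integral>z. inner v (clip (v + k *\<^sub>R z) c) \<partial>(std_gauss::'a measure))"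
    define a where "a = (\<integral>z. inner v (clip (v + k *\<^sub>R z) c) *\<^sub>R z \<partial>(std_gauss::'a measure))"
    define K where "K = 6 * (norm v * c) * J"
    have LHS: "integral\<^sup>L (N \<Otimes>\<^sub>M std_gauss) F = (\<integral>x. h x \<partial>N)"
      using P.integral_fst'[OF iF] unfolding h_def F_def by simp
    have ih: "integrable N h"
      using P.integrable_fst'[OF iF] unfolding h_def F_def by simp
    have pw: "h x \<ge> h0 + inner a x / k - K * (norm x)^2 / k^2" for x
      using hB[OF c k, of v x] unfolding h_def h0_def a_def K_def J_def by simp
    have ir: "integrable N (\<lambda>x. h0 + inner a x / k - K * (norm x)^2 / k^2)"
      using ix i2 by (intro Bochner_Integration.integrable_diff Bochner_Integration.integrable_add) auto
    have "(\<integral>x. h x \<partial>N) \<ge> (\<integral>x. h0 + inner a x / k - K * (norm x)^2 / k^2 \<partial>N)"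
      by (rule Bochner_Integration.integral_mono[OF ir ih pw])
    also have "(\<integral>x. h0 + inner a x / k - K * (norm x)^2 / k^2 \<partial>N)
        = h0 + inner a (\<integral>x. x \<partial>N) / k - K * (\<integral>x. (norm x)^2 \<partial>N) / k^2"
    proof -
      have pr: "measure N UNIV = 1" using N.prob_space by simp
      show ?thesis using ix i2 pr by simp
    qed
    also have "\<dots> = h0 - K * (\<integral>x. (norm x)^2 \<partial>N) / k^2" using mx by simp
    finally have m1: "(\<integral>x. h x \<partial>N) \<ge> h0 - K * (\<integral>x. (norm x)^2 \<partial>N) / k^2" .
    have m2: "h0 \<ge> norm v * min (norm v) (3 / 4 * c) * measure (std_gauss :: 'a measure) {z. norm (k *\<^sub>R z) < c / 4}"
      unfolding h0_def by (rule h0_lower[OF c k])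
    show "(\<integral> z. inner v (clip (v + fst z + k *\<^sub>R snd z) c)
        \<partial>(density lborel (\<lambda>x. ennreal (p x)) \<Otimes>\<^sub>M std_gauss))
      \<ge> norm v * min (norm v) (3 / 4 * c) * measure (std_gauss :: 'a measure) {z. norm (k *\<^sub>R z) < c / 4}
        - 6 * (norm v * c) * J * (\<integral> x. (norm x)\<^sup>2 \<partial>density lborel (\<lambda>x. ennreal (p x))) / k\<^sup>2"
      using LHS m1 m2 unfolding F_def N_def K_def by linarith
  qed
qed

end
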